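(* Let $\mathcal F,\mathcal G$ be weighted species with coefficients $f_n=[z^n]\mathcal F(z)$ and $g_n=[z^n]\mathcal G(z)$, both positive for all sufficiently large $n$. Suppose $\mathcal G$ has radius of convergence $\rho_{\mathcal G}\in(0,\infty)$, that $g_n/g_{n+1}\to\rho_{\mathcal G}$ and $\frac1{g_n}\sum_{i+j=n}g_ig_j\to2\mathcal G(\rho_{\mathcal G})<\infty$, and that $f_n=o(g_n)$. Let $\mathsf S_n$ be an $n$-sized $\mathcal F\mathcal G$-structure (on label set $\{1,\dots,n\}$) drawn with probability proportional to its weight. Then $$[z^n]\mathcal F(z)\mathcal G(z)\sim\mathcal F(\rho_{\mathcal G})\,g_n,$$ and the $\mathcal F$-component of $\mathsf S_n$, relabelled order-preservingly onto $\{1,\dots,|\cdot|\}$, converges in distribution to a Boltzmann distributed $\mathcal F$-object with parameter $\rho_{\mathcal G}$.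
   Context: A weighted species $\mathcal F$ assigns to each finite set $U$ a finite set $\mathcal F[U]$ of structures, each with a nonnegative weight, compatibly with relabelling along bijections; $[z^n]\mathcal F(z)$ is $1/n!$ times the total weight of $\mathcal F[\{1,\dots,n\}]$ and $\mathcal F(z)$ is the exponential generating series. An $\mathcal F\mathcal G$-structure on $U$ is a pair consisting of an $\mathcal F$-structure on $U_1$ and a $\mathcal G$-structure on $U_2$ with $U=U_1\sqcup U_2$, weight the product; its components are the two parts. For $\rho>0$ with $\mathcal F(\rho)<\infty$, the Boltzmann distribution with parameter $\rho$ selects $F\in\mathcal F[\{1,\dots,m\}]$, $m\ge0$, with probability $\omega(F)\rho^m/(m!\,\mathcal F(\rho))$, $\omega(F)$ the weight. *)

theory Defs
  imports "HOL-Analysis.Analysis" "HOL-Library.Landau_Symbols"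
begin

definition weighted_species ::
  "(nat set \<Rightarrow> 'a set) \<Rightarrow> ((nat \<Rightarrow> nat) \<Rightarrow> 'a \<Rightarrow> 'a) \<Rightarrow> ('a \<Rightarrow> real) \<Rightarrow> bool" where
  "weighted_species S tr w \<longleftrightarrow>
     (\<forall>U. finite U \<longrightarrow> finite (S U)) \<and>
     (\<forall>x. 0 \<le> w x) \<and>
     (\<forall>U V \<sigma>. finite U \<and> bij_betw \<sigma> U V \<longrightarrow>
        (\<forall>x\<in>S U. tr \<sigma> x \<in> S V \<and> w (tr \<sigma> x) = w x)) \<and>
     (\<forall>U x. finite U \<and> x \<in> S U \<longrightarrow> tr id x = x) \<and>
     (\<forall>U V W \<sigma> \<tau> x. finite U \<and> bij_betw \<sigma> U V \<and> bij_betw \<tau> V W \<and> x \<in> S U \<longrightarrow>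
        tr (\<tau> \<circ> \<sigma>) x = tr \<tau> (tr \<sigma> x)) \<and>
     (\<forall>U \<sigma> \<sigma>' x. finite U \<and> x \<in> S U \<and> (\<forall>i\<in>U. \<sigma> i = \<sigma>' i) \<longrightarrow>
        tr \<sigma> x = tr \<sigma>' x)"

definition egf_coeff :: "(nat set \<Rightarrow> 'a set) \<Rightarrow> ('a \<Rightarrow> real) \<Rightarrow> nat \<Rightarrow> real" where
  "egf_coeff S w n = (\<Sum>x\<in>S {1..n}. w x) / fact n"

definition egf_val :: "(nat set \<Rightarrow> 'a set) \<Rightarrow> ('a \<Rightarrow> real) \<Rightarrow> real \<Rightarrow> real" where
  "egf_val S w z = (\<Sum>n. egf_coeff S w n * z ^ n)"

definition prod_coeff :: "(nat \<Rightarrow> real) \<Rightarrow> (nat \<Rightarrow> real) \<Rightarrow> nat \<Rightarrow> real" where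
  "prod_coeff f g n = (\<Sum>i\<le>n. f i * g (n - i))"

definition prod_structs ::
  "(nat set \<Rightarrow> 'a set) \<Rightarrow> (nat set \<Rightarrow> 'b set) \<Rightarrow> nat \<Rightarrow> (nat set \<times> 'a \<times> 'b) set" where
  "prod_structs SF SG n =
     {(U, x, y). U \<subseteq> {1..n} \<and> x \<in> SF U \<and> y \<in> SG ({1..n} - U)}"

text \<open>The order-preserving bijection from a finite set U of naturals onto {1..card U}.\<close>
definition rank :: "nat set \<Rightarrow> nat \<Rightarrow> nat" where
  "rank U i = card {j\<in>U. j \<le> i}"

text \<open>Expectation of h applied to the relabelled F-component (recorded together with
  its size) of the random FG-structure S_n drawn proportionally to its weight.\<close>
definition comp_expect ::
  "(nat set \<Rightarrow> 'a set) \<Rightarrow> ((nat \<Rightarrow> nat) \<Rightarrow> 'a \<Rightarrow> 'a) \<Rightarrow> ('a \<Rightarrow> real) \<Rightarrow>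
   (nat set \<Rightarrow> 'b set) \<Rightarrow> ('b \<Rightarrow> real) \<Rightarrow> nat \<Rightarrow> (nat \<times> 'a \<Rightarrow> real) \<Rightarrow> real" where
  "comp_expect SF trF wF SG wG n h =
     (\<Sum>(U, x, y)\<in>prod_structs SF SG n. wF x * wG y * h (card U, trF (rank U) x))
     / (\<Sum>(U, x, y)\<in>prod_structs SF SG n. wF x * wG y)"

definition boltzmann_expect ::
  "(nat set \<Rightarrow> 'a set) \<Rightarrow> ('a \<Rightarrow> real) \<Rightarrow> real \<Rightarrow> (nat \<times> 'a \<Rightarrow> real) \<Rightarrow> real" where
  "boltzmann_expect S w \<rho> h =
     (\<Sum>m. \<Sum>x\<in>S {1..m}. h (m, x) * w x * \<rho> ^ m / (fact m * egf_val S w \<rho>))"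

end

theory Submission
  imports Defs "HOL-Library.Landau_Symbols"
begin


lemma shift_ratio:
  fixes g :: "nat \<Rightarrow> real"
  assumes gpos: "eventually (\<lambda>n. g n > 0) at_top"
  and ratio: "(\<lambda>n. g n / g (Suc n)) \<longlonglongrightarrow> \<rho>"
  shows "(\<lambda>n. g (n - k) / g n) \<longlonglongrightarrow> \<rho> ^ k"
proof -
  have "(\<lambda>n. g n / g (n + k)) \<longlonglongrightarrow> \<rho> ^ k"
  proof (induction k)
    case 0
    have "eventually (\<lambda>n. 1 = g n / g (n + 0)) at_top" using gpos by eventually_elim simp
    from Lim_transform_eventually[OF tendsto_const this] show ?case by simp
  next
    case (Suc k)
    have r: "(\<lambda>n. g (n + k) / g (Suc (n + k))) \<longlonglongrightarrow> \<rho>"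
      using LIMSEQ_ignore_initial_segment[OF ratio, of k] by (simp add: add.commute)
    have ev: "eventually (\<lambda>n. g (n + k) > 0) at_top"
    proof -
      obtain M where M: "\<And>n. n \<ge> M \<Longrightarrow> g n > 0" using gpos by (auto simp: eventually_sequentially)
      show ?thesis unfolding eventually_sequentially by (rule exI[of _ M]) (auto intro!: M)
    qed
    have "eventually (\<lambda>n. g n / g (n + k) * (g (n + k) / g (Suc (n + k))) = g n / g (n + Suc k)) at_top"
      using ev by eventually_elim simp
    from Lim_transform_eventually[OF tendsto_mult[OF Suc r] this] show ?case by (simp add: mult.commute)
  qed
  then have "(\<lambda>n. g (n + k - k) / g (n + k)) \<longlonglongrightarrow> \<rho> ^ k" by simp
  then show ?thesis by (rule LIMSEQ_offset)
qed

lemma approx_lim: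
  fixes X :: "nat \<Rightarrow> real"
  assumes "\<And>e. e > 0 \<Longrightarrow> \<exists>Y ly. Y \<longlonglongrightarrow> ly \<and> \<bar>ly - L\<bar> \<le> e \<and> eventually (\<lambda>n. \<bar>X n - Y n\<bar> \<le> e) at_top"
  shows "X \<longlonglongrightarrow> L"
proof (rule LIMSEQ_I)
  fix r :: real assume r: "r > 0"
  obtain Y ly where Y: "Y \<longlonglongrightarrow> ly" "\<bar>ly - L\<bar> \<le> r/4" "eventually (\<lambda>n. \<bar>X n - Y n\<bar> \<le> r/4) at_top"
    using assms[of "r/4"] r by auto
  have r4: "r/4 > 0" using r by simp
  have "eventually (\<lambda>n. dist (Y n) ly < r/4) at_top" using Y(1)[unfolded tendsto_iff, rule_format, OF r4] .
  then have "eventually (\<lambda>n. norm (X n - L) < r) at_top" using Y(3)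
    by eventually_elim (use Y(2) in \<open>auto simp: dist_real_def abs_if split: if_splits\<close>)
  then show "\<exists>no. \<forall>n\<ge>no. norm (X n - L) < r" by (simp add: eventually_sequentially)
qed

lemma key:
  fixes a g :: "nat \<Rightarrow> real" and \<rho> C :: real
  assumes g0: "\<And>n. g n \<ge> 0"
  and gpos: "eventually (\<lambda>n. g n > 0) at_top"
  and ratio: "(\<lambda>n. g n / g (Suc n)) \<longlonglongrightarrow> \<rho>"
  and Gfin: "summable (\<lambda>n. g n * \<rho> ^ n)"
  and conv: "(\<lambda>n. prod_coeff g g n / g n) \<longlonglongrightarrow> C"
  and rho: "\<rho> > 0"
  and small: "a \<in> o(g)"
  shows "summable (\<lambda>n. a n * \<rho> ^ n) \<and> (\<lambda>n. prod_coeff a g n / g n) \<longlonglongrightarrow> (\<Sum>n. a n * \<rho> ^ n)"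
proof -
  define T where "T = (\<Sum>n. g n * \<rho> ^ n)"
  have T0: "T \<ge> 0" unfolding T_def using g0 rho by (intro suminf_nonneg[OF Gfin]) simp
  have ev1: "eventually (\<lambda>n. norm (a n) \<le> 1 * norm (g n)) at_top"
    using landau_o.smallD[OF small, of 1] by simp
  have sa: "summable (\<lambda>n. a n * \<rho> ^ n)"
  proof (rule summable_comparison_test_ev[OF _ Gfin])
    show "eventually (\<lambda>n. norm (a n * \<rho> ^ n) \<le> g n * \<rho> ^ n) at_top"
      using ev1 by eventually_elim (use g0 rho in \<open>auto simp: abs_mult intro!: mult_right_mono\<close>)
  qed
  have Cb: "eventually (\<lambda>n. prod_coeff g g n / g n \<le> C + 1) at_top"
    using order_tendstoD(2)[OF conv, of "C+1"] by (auto elim: eventually_mono)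
  have C0: "C \<ge> 0"
  proof (rule tendsto_lowerbound[OF conv])
    show "\<forall>\<^sub>F n in sequentially. 0 \<le> prod_coeff g g n / g n"
      using g0 by (auto simp: prod_coeff_def intro!: always_eventually sum_nonneg divide_nonneg_nonneg)
  qed simp
  show ?thesis
  proof (intro conjI sa approx_lim)
    fix e :: real assume e: "e > 0"
    define e' where "e' = e / (C + 1 + T + 1)"
    have e'p: "e' > 0" using e C0 T0 by (simp add: e'_def)
    have e'1: "e' * (C + 1) \<le> e" "e' * T \<le> e"
      using e C0 T0 by (simp_all add: e'_def field_simps)
    obtain N where N: "\<And>i. i \<ge> N \<Longrightarrow> \<bar>a i\<bar> \<le> e' * g i"
      using landau_o.smallD[OF small e'p] g0 by (auto simp: eventually_sequentially)
    define Y where "Y = (\<lambda>n. \<Sum>i<N. a i * (g (n - i) / g n))"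
    have Ylim: "Y \<longlonglongrightarrow> (\<Sum>i<N. a i * \<rho> ^ i)"
      unfolding Y_def by (intro tendsto_sum tendsto_mult tendsto_const shift_ratio[OF gpos ratio])
    have split: "(\<Sum>n. a n * \<rho> ^ n) = (\<Sum>n. a (n + N) * \<rho> ^ (n + N)) + (\<Sum>i<N. a i * \<rho> ^ i)"
      using suminf_split_initial_segment[OF sa, of N] by simp
    have sN: "summable (\<lambda>n. a (n + N) * \<rho> ^ (n + N))"
      using summable_ignore_initial_segment[OF sa, of N] by simp
    have sgN: "summable (\<lambda>n. e' * (g (n + N) * \<rho> ^ (n + N)))"
      using summable_ignore_initial_segment[OF Gfin, of N] by (intro summable_mult) simp
    have "\<bar>\<Sum>n. a (n + N) * \<rho> ^ (n + N)\<bar> \<le> (\<Sum>n. e' * (g (n + N) * \<rho> ^ (n + N)))"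
    proof -
      have sabs: "summable (\<lambda>n. \<bar>a (n + N) * \<rho> ^ (n + N)\<bar>)"
        by (rule summable_comparison_test[OF _ sgN])
           (use N rho in \<open>auto simp: abs_mult intro!: mult_right_mono\<close>)
      have "\<bar>\<Sum>n. a (n + N) * \<rho> ^ (n + N)\<bar> \<le> (\<Sum>n. \<bar>a (n + N) * \<rho> ^ (n + N)\<bar>)"
        by (rule summable_rabs[OF sabs])
      also have "\<dots> \<le> (\<Sum>n. e' * (g (n + N) * \<rho> ^ (n + N)))"
      proof (rule suminf_le)
        show "\<And>n. \<bar>a (n + N) * \<rho> ^ (n + N)\<bar> \<le> e' * (g (n + N) * \<rho> ^ (n + N))"
          using N rho by (auto simp: abs_mult intro!: mult_right_mono)
      qed (fact sabs, fact sgN)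
      finally show ?thesis .
    qed
    also have "(\<Sum>n. e' * (g (n + N) * \<rho> ^ (n + N))) = e' * (\<Sum>n. g (n + N) * \<rho> ^ (n + N))"
      using summable_ignore_initial_segment[OF Gfin, of N] by (intro suminf_mult) simp
    also have "(\<Sum>n. g (n + N) * \<rho> ^ (n + N)) \<le> T"
    proof -
      have "T = (\<Sum>n. g (n + N) * \<rho> ^ (n + N)) + (\<Sum>i<N. g i * \<rho> ^ i)"
        unfolding T_def using suminf_split_initial_segment[OF Gfin, of N] by simp
      moreover have "(\<Sum>i<N. g i * \<rho> ^ i) \<ge> 0" using g0 rho by (intro sum_nonneg) simp
      ultimately show ?thesis by simp
    qed
    then have "e' * (\<Sum>n. g (n + N) * \<rho> ^ (n + N)) \<le> e' * T" using e'p by simp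
    finally have tail: "\<bar>(\<Sum>i<N. a i * \<rho> ^ i) - (\<Sum>n. a n * \<rho> ^ n)\<bar> \<le> e"
      using split e'1 by simp
    have "eventually (\<lambda>n. \<bar>prod_coeff a g n / g n - Y n\<bar> \<le> e) at_top"
      using Cb gpos eventually_ge_at_top[of N]
    proof eventually_elim
      case (elim n)
      have gn: "g n > 0" using elim by simp
      have "prod_coeff a g n = (\<Sum>i<N. a i * g (n - i)) + (\<Sum>i\<in>{N..n}. a i * g (n - i))"
        unfolding prod_coeff_def using elim(3)
        by (subst sum.union_disjoint[symmetric]) (auto intro!: sum.cong)
      then have "prod_coeff a g n / g n - Y n = (\<Sum>i\<in>{N..n}. a i * g (n - i)) / g n"
        unfolding Y_def using gn by (simp add: sum_divide_distrib add_divide_distrib)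
      also have "\<bar>\<dots>\<bar> \<le> (\<Sum>i\<in>{N..n}. e' * (g i * g (n - i))) / g n"
      proof -
        have "\<bar>\<Sum>i\<in>{N..n}. a i * g (n - i)\<bar> \<le> (\<Sum>i\<in>{N..n}. \<bar>a i * g (n - i)\<bar>)"
          by (rule sum_abs)
        also have "\<dots> \<le> (\<Sum>i\<in>{N..n}. e' * (g i * g (n - i)))"
        proof (rule sum_mono)
          fix i assume "i \<in> {N..n}"
          then have "\<bar>a i\<bar> \<le> e' * g i" using N by simp
          then have "\<bar>a i\<bar> * g (n - i) \<le> e' * g i * g (n - i)" using g0 by (rule mult_right_mono)
          then show "\<bar>a i * g (n - i)\<bar> \<le> e' * (g i * g (n - i))" using g0 by (simp add: abs_mult mult.assoc)
        qed
        finally show ?thesis using gn by (simp add: divide_right_mono)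
      qed
      also have "\<dots> \<le> e' * prod_coeff g g n / g n"
        unfolding prod_coeff_def sum_distrib_left[symmetric] using gn e'p g0
        by (intro divide_right_mono mult_left_mono sum_mono2) auto
      also have "\<dots> = e' * (prod_coeff g g n / g n)" by simp
      also have "\<dots> \<le> e' * (C + 1)" using elim(1) e'p by (intro mult_left_mono) auto
      finally show ?case using e'1 by simp
    qed
    then show "\<exists>Y ly. Y \<longlonglongrightarrow> ly \<and> \<bar>ly - (\<Sum>n. a n * \<rho> ^ n)\<bar> \<le> e \<and>
        eventually (\<lambda>n. \<bar>prod_coeff a g n / g n - Y n\<bar> \<le> e) at_top"
      using Ylim tail by blast
  qed
qed



lemma rank_bij:
  assumes U: "finite U"
  shows "bij_betw (rank U) U {1..card U}"
proof -
  have mono: "rank U i < rank U i'" if "i \<in> U" "i' \<in> U" "i < i'" for i i'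
  proof -
    have "i' \<in> {j\<in>U. j \<le> i'}" "i' \<notin> {j\<in>U. j \<le> i}" using that by auto
    then have "{j\<in>U. j \<le> i} \<subset> {j\<in>U. j \<le> i'}" using that(3) by (auto simp del: mem_Collect_eq)
    then show ?thesis unfolding rank_def using U by (intro psubset_card_mono) auto
  qed
  have inj: "inj_on (rank U) U"
    by (rule inj_onI) (metis linorder_neqE_nat mono less_irrefl)
  have sub: "rank U ` U \<subseteq> {1..card U}"
  proof
    fix k assume "k \<in> rank U ` U"
    then obtain i where i: "i \<in> U" "k = rank U i" by auto
    have "i \<in> {j\<in>U. j \<le> i}" using i by auto
    then have "card {j\<in>U. j \<le> i} \<ge> 1" using U by (metis (no_types, lifting) One_nat_def Suc_leI card_gt_0_iff empty_iff finite_subset mem_Collect_eq subsetI)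
    moreover have "card {j\<in>U. j \<le> i} \<le> card U" using U by (intro card_mono) auto
    ultimately show "k \<in> {1..card U}" using i by (simp add: rank_def)
  qed
  have "card (rank U ` U) = card {1..card U}" using card_image[OF inj] by simp
  then have "rank U ` U = {1..card U}" using sub by (intro card_subset_eq) auto
  then show ?thesis using inj by (simp add: bij_betw_def)
qed

lemma transport_sum:
  assumes S: "weighted_species S tr w" and U: "finite U"
  shows "(\<Sum>x\<in>S U. w x * h (tr (rank U) x)) = (\<Sum>x\<in>S {1..card U}. w x * h x)"
proof -
  let ?r = "rank U" and ?V = "{1..card U}"
  have b: "bij_betw ?r U ?V" by (rule rank_bij[OF U])
  define s where "s = inv_into U ?r"
  have bs: "bij_betw s ?V U" unfolding s_def by (rule bij_betw_inv_into[OF b])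
  have s1: "\<forall>i\<in>U. (s \<circ> ?r) i = id i" unfolding s_def using b by (simp add: bij_betw_def)
  have s2: "\<forall>i\<in>?V. (?r \<circ> s) i = id i" unfolding s_def using b by (simp add: bij_betw_def f_inv_into_f)
  note D = S[unfolded weighted_species_def]
  have ax3: "\<And>U V \<sigma> x. finite U \<Longrightarrow> bij_betw \<sigma> U V \<Longrightarrow> x \<in> S U \<Longrightarrow> tr \<sigma> x \<in> S V \<and> w (tr \<sigma> x) = w x"
    using D[THEN conjunct2, THEN conjunct2, THEN conjunct1] by blast
  have ax4: "\<And>U x. finite U \<Longrightarrow> x \<in> S U \<Longrightarrow> tr id x = x"
    using D[THEN conjunct2, THEN conjunct2, THEN conjunct2, THEN conjunct1] by blast
  have ax5: "\<And>U V W \<sigma> \<tau> x. finite U \<Longrightarrow> bij_betw \<sigma> U V \<Longrightarrow> bij_betw \<tau> V W \<Longrightarrow> x \<in> S U \<Longrightarrow>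
        tr (\<tau> \<circ> \<sigma>) x = tr \<tau> (tr \<sigma> x)"
    using D[THEN conjunct2, THEN conjunct2, THEN conjunct2, THEN conjunct2, THEN conjunct1] by blast
  have ax6: "\<And>U \<sigma> \<sigma>' x. finite U \<Longrightarrow> x \<in> S U \<Longrightarrow> (\<forall>i\<in>U. \<sigma> i = \<sigma>' i) \<Longrightarrow> tr \<sigma> x = tr \<sigma>' x"
    using D[THEN conjunct2, THEN conjunct2, THEN conjunct2, THEN conjunct2, THEN conjunct2] by blast
  have fV: "finite ?V" by simp
  have m1: "\<forall>x\<in>S U. tr ?r x \<in> S ?V \<and> w (tr ?r x) = w x" using ax3[OF U b] by blast
  have m2: "\<forall>x\<in>S ?V. tr s x \<in> S U" using ax3[OF fV bs] by blast
  have i1: "tr s (tr ?r x) = x" if x: "x \<in> S U" for x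
  proof -
    have "tr s (tr ?r x) = tr (s \<circ> ?r) x" by (rule ax5[OF U b bs x, symmetric])
    also have "\<dots> = tr id x" by (rule ax6[OF U x s1])
    also have "\<dots> = x" by (rule ax4[OF U x])
    finally show ?thesis .
  qed
  have i2: "tr ?r (tr s x) = x" if x: "x \<in> S ?V" for x
  proof -
    have "tr ?r (tr s x) = tr (?r \<circ> s) x" by (rule ax5[OF fV bs b x, symmetric])
    also have "\<dots> = tr id x" by (rule ax6[OF fV x s2])
    also have "\<dots> = x" by (rule ax4[OF fV x])
    finally show ?thesis .
  qed
  have bb: "bij_betw (tr ?r) (S U) (S ?V)"
    by (rule bij_betw_byWitness[where f'="tr s"]) (use i1 i2 m1 m2 in auto)
  have "(\<Sum>x\<in>S ?V. w x * h x) = (\<Sum>x\<in>S U. w (tr ?r x) * h (tr ?r x))"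
    by (rule sum.reindex_bij_betw[OF bb, symmetric])
  also have "\<dots> = (\<Sum>x\<in>S U. w x * h (tr ?r x))" using m1 by (intro sum.cong) auto
  finally show ?thesis by simp
qed

lemma comb:
  assumes F: "weighted_species SF trF wF" and G: "weighted_species SG trG wG"
  shows "(\<Sum>(U, x, y)\<in>prod_structs SF SG n. wF x * wG y * h (card U, trF (rank U) x))
     = fact n * prod_coeff (\<lambda>k. (\<Sum>x\<in>SF {1..k}. wF x * h (k, x)) / fact k) (egf_coeff SG wG) n"
proof -
  define c where "c k = (\<Sum>x\<in>SF {1..k}. wF x * h (k, x))" for k
  define d where "d m = (\<Sum>y\<in>SG {1..m}. wG y)" for m
  have finF: "\<And>U. finite U \<Longrightarrow> finite (SF U)" and finG: "\<And>U. finite U \<Longrightarrow> finite (SG U)"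
    using F[unfolded weighted_species_def, THEN conjunct1] G[unfolded weighted_species_def, THEN conjunct1] by auto
  have ps: "prod_structs SF SG n = (SIGMA U:Pow {1..n}. SIGMA x:SF U. SG ({1..n} - U))"
    unfolding prod_structs_def by auto
  have "(\<Sum>(U, x, y)\<in>prod_structs SF SG n. wF x * wG y * h (card U, trF (rank U) x))
      = (\<Sum>U\<in>Pow {1..n}. \<Sum>(x, y)\<in>(SIGMA x:SF U. SG ({1..n} - U)). wF x * wG y * h (card U, trF (rank U) x))"
    unfolding ps by (subst sum.Sigma[symmetric]) (auto intro!: finite_subset[OF _ finite_atLeastAtMost] finF finG)
  also have "\<dots> = (\<Sum>U\<in>Pow {1..n}. c (card U) * d (n - card U))"
  proof (rule sum.cong[OF refl])
    fix U assume U: "U \<in> Pow {1..n}"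
    have fU: "finite U" using U finite_subset by auto
    have cd: "card ({1..n} - U) = n - card U" using U fU by (subst card_Diff_subset) auto
    have "(\<Sum>(x, y)\<in>(SIGMA x:SF U. SG ({1..n} - U)). wF x * wG y * h (card U, trF (rank U) x))
        = (\<Sum>x\<in>SF U. \<Sum>y\<in>SG ({1..n} - U). wF x * wG y * h (card U, trF (rank U) x))"
      by (subst sum.Sigma[symmetric]) (auto intro!: finF finG fU)
    also have "\<dots> = (\<Sum>x\<in>SF U. wF x * h (card U, trF (rank U) x)) * (\<Sum>y\<in>SG ({1..n} - U). wG y * 1)"
      unfolding sum_product by (intro sum.cong refl) (simp add: mult_ac)
    also have "\<dots> = c (card U) * d (n - card U)"
      unfolding c_def d_def
      using transport_sum[OF F fU, of "\<lambda>x. h (card U, x)"] transport_sum[OF G, of "{1..n} - U" "\<lambda>_. 1"] cd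
      by simp
    finally show "(\<Sum>(x, y)\<in>(SIGMA x:SF U. SG ({1..n} - U)). wF x * wG y * h (card U, trF (rank U) x))
        = c (card U) * d (n - card U)" .
  qed
  also have "\<dots> = (\<Sum>k\<le>n. \<Sum>U\<in>{U \<in> Pow {1..n}. card U = k}. c (card U) * d (n - card U))"
    by (rule sum.group[symmetric]) (auto simp: card_mono[of "{1..n}", simplified])
  also have "\<dots> = (\<Sum>k\<le>n. of_nat (n choose k) * (c k * d (n - k)))"
  proof (rule sum.cong[OF refl])
    fix k assume "k \<in> {..n}"
    have "card {U \<in> Pow {1..n}. card U = k} = n choose k"
      using n_subsets[of "{1..n}" k] by (simp add: Pow_def)
    then show "(\<Sum>U\<in>{U \<in> Pow {1..n}. card U = k}. c (card U) * d (n - card U)) = of_nat (n choose k) * (c k * d (n - k))"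
      by simp
  qed
  also have "\<dots> = fact n * prod_coeff (\<lambda>k. c k / fact k) (egf_coeff SG wG) n"
    unfolding prod_coeff_def sum_distrib_left
  proof (rule sum.cong[OF refl])
    fix k assume k: "k \<in> {..n}"
    then have "(of_nat (n choose k) :: real) = fact n / (fact k * fact (n - k))" by (simp add: binomial_fact)
    then show "of_nat (n choose k) * (c k * d (n - k)) = fact n * (c k / fact k * egf_coeff SG wG (n - k))"
      by (simp add: egf_coeff_def d_def field_simps)
  qed
  finally show ?thesis unfolding c_def .
qed



theorem proposition5:
  fixes SF :: "nat set \<Rightarrow> 'a set" and trF :: "(nat \<Rightarrow> nat) \<Rightarrow> 'a \<Rightarrow> 'a" and wF :: "'a \<Rightarrow> real"
    and SG :: "nat set \<Rightarrow> 'b set" and trG :: "(nat \<Rightarrow> nat) \<Rightarrow> 'b \<Rightarrow> 'b" and wG :: "'b \<Rightarrow> real"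
    and \<rho> :: real
  assumes F: "weighted_species SF trF wF"
    and G: "weighted_species SG trG wG"
    and fpos: "eventually (\<lambda>n. egf_coeff SF wF n > 0) at_top"
    and gpos: "eventually (\<lambda>n. egf_coeff SG wG n > 0) at_top"
    and rad: "conv_radius (egf_coeff SG wG) = ereal \<rho>"
    and rho_pos: "0 < \<rho>"
    and ratio: "(\<lambda>n. egf_coeff SG wG n / egf_coeff SG wG (Suc n)) \<longlonglongrightarrow> \<rho>"
    and Gfin: "summable (\<lambda>n. egf_coeff SG wG n * \<rho> ^ n)"
    and conv: "(\<lambda>n. prod_coeff (egf_coeff SG wG) (egf_coeff SG wG) n / egf_coeff SG wG n)
                 \<longlonglongrightarrow> 2 * egf_val SG wG \<rho>"
    and small: "egf_coeff SF wF \<in> o(egf_coeff SG wG)"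
  shows "(prod_coeff (egf_coeff SF wF) (egf_coeff SG wG)
           \<sim>[at_top] (\<lambda>n. egf_val SF wF \<rho> * egf_coeff SG wG n)) \<and>
         (\<forall>h :: nat \<times> 'a \<Rightarrow> real. (\<exists>B. \<forall>p. \<bar>h p\<bar> \<le> B) \<longrightarrow>
           (\<lambda>n. comp_expect SF trF wF SG wG n h) \<longlonglongrightarrow> boltzmann_expect SF wF \<rho> h)"
  proof -
  define f where "f = egf_coeff SF wF"
  define g where "g = egf_coeff SG wG"
  have wF0: "\<And>x. wF x \<ge> 0" using F[unfolded weighted_species_def, THEN conjunct2, THEN conjunct1] by blast
  have wG0: "\<And>x. wG x \<ge> 0" using G[unfolded weighted_species_def, THEN conjunct2, THEN conjunct1] by blast
  have g0: "\<And>n. g n \<ge> 0" unfolding g_def egf_coeff_def using wG0 by (auto intro!: sum_nonneg divide_nonneg_nonneg)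
  have f0: "\<And>n. f n \<ge> 0" unfolding f_def egf_coeff_def using wF0 by (auto intro!: sum_nonneg divide_nonneg_nonneg)
  have kf: "summable (\<lambda>n. f n * \<rho> ^ n) \<and> (\<lambda>n. prod_coeff f g n / g n) \<longlonglongrightarrow> (\<Sum>n. f n * \<rho> ^ n)"
    using key[OF g0 gpos[folded g_def] ratio[folded g_def] Gfin[folded g_def] conv[folded g_def] rho_pos small[folded f_def g_def]] .
  have Fv: "egf_val SF wF \<rho> = (\<Sum>n. f n * \<rho> ^ n)" unfolding egf_val_def f_def ..
  obtain i where fi: "f i > 0" using fpos[folded f_def] eventually_sequentially by (metis order_refl)
  have Fpos: "egf_val SF wF \<rho> > 0" unfolding Fv
    by (rule suminf_pos2[of _ i]) (use kf f0 rho_pos fi in auto)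
  have part1: "prod_coeff f g \<sim>[at_top] (\<lambda>n. egf_val SF wF \<rho> * g n)"
    by (rule asymp_equivI'_const) (use kf Fv Fpos in auto)
  have part2: "(\<lambda>n. comp_expect SF trF wF SG wG n h) \<longlonglongrightarrow> boltzmann_expect SF wF \<rho> h"
    if hb: "\<forall>p. \<bar>h p\<bar> \<le> B" for h :: "nat \<times> 'a \<Rightarrow> real" and B
  proof -
    define a where "a k = (\<Sum>x\<in>SF {1..k}. wF x * h (k, x)) / fact k" for k
    have B0: "B \<ge> 0" using hb by (metis abs_ge_zero order_trans)
    have "a \<in> O(f)"
    proof (rule bigoI[where c=B], rule always_eventually, rule allI)
      fix k
      have "\<bar>\<Sum>x\<in>SF {1..k}. wF x * h (k, x)\<bar> \<le> (\<Sum>x\<in>SF {1..k}. wF x * B)"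
        by (rule order.trans[OF sum_abs sum_mono]) (use wF0 hb in \<open>auto simp: abs_mult intro!: mult_left_mono\<close>)
      also have "\<dots> = B * (\<Sum>x\<in>SF {1..k}. wF x)" by (simp add: sum_distrib_left mult.commute)
      finally have "\<bar>a k\<bar> \<le> B * (\<Sum>x\<in>SF {1..k}. wF x) / fact k"
        unfolding a_def by (simp add: divide_right_mono)
      then have "\<bar>a k\<bar> \<le> B * f k"
        unfolding f_def egf_coeff_def by simp
      then show "norm (a k) \<le> B * norm (f k)" using f0 by simp
    qed
    then have asmall: "a \<in> o(g)" using landau_o.big_small_trans small[folded f_def g_def] by blast
    have ka: "summable (\<lambda>n. a n * \<rho> ^ n) \<and> (\<lambda>n. prod_coeff a g n / g n) \<longlonglongrightarrow> (\<Sum>n. a n * \<rho> ^ n)"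
      using key[OF g0 gpos[folded g_def] ratio[folded g_def] Gfin[folded g_def] conv[folded g_def] rho_pos asmall] .
    have ce: "comp_expect SF trF wF SG wG n h = (prod_coeff a g n / g n) / (prod_coeff f g n / g n)" if gn: "g n > 0" for n
    proof -
      have num: "(\<Sum>(U, x, y)\<in>prod_structs SF SG n. wF x * wG y * h (card U, trF (rank U) x)) = fact n * prod_coeff a g n"
        using comb[OF F G, where n=n and h=h] unfolding a_def g_def .
      have "(\<Sum>(U, x, y)\<in>prod_structs SF SG n. wF x * wG y * (\<lambda>_. 1) (card U, trF (rank U) x))
          = fact n * prod_coeff (\<lambda>k. (\<Sum>x\<in>SF {1..k}. wF x * (\<lambda>_. 1) (k, x)) / fact k) g n"
        using comb[OF F G, where n=n and h="\<lambda>_. 1"] unfolding g_def .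
      moreover have "(\<lambda>k. (\<Sum>x\<in>SF {1..k}. wF x * (\<lambda>_. 1) (k, x)) / fact k) = f"
        by (simp add: f_def egf_coeff_def fun_eq_iff)
      ultimately have den: "(\<Sum>(U, x, y)\<in>prod_structs SF SG n. wF x * wG y) = fact n * prod_coeff f g n"
        by simp
      show ?thesis unfolding comp_expect_def num den using gn by simp
    qed
    have lim: "(\<lambda>n. (prod_coeff a g n / g n) / (prod_coeff f g n / g n)) \<longlonglongrightarrow> (\<Sum>n. a n * \<rho> ^ n) / egf_val SF wF \<rho>"
      using tendsto_divide[OF conjunct2[OF ka] conjunct2[OF kf]] Fpos Fv by simp
    have ev: "eventually (\<lambda>n. (prod_coeff a g n / g n) / (prod_coeff f g n / g n) = comp_expect SF trF wF SG wG n h) at_top"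
      using gpos[folded g_def] by eventually_elim (simp add: ce)
    have be: "boltzmann_expect SF wF \<rho> h = (\<Sum>n. a n * \<rho> ^ n) / egf_val SF wF \<rho>"
    proof -
      have "\<And>m. (\<Sum>x\<in>SF {1..m}. h (m, x) * wF x * \<rho> ^ m / (fact m * egf_val SF wF \<rho>)) = a m * \<rho> ^ m / egf_val SF wF \<rho>"
        unfolding a_def sum_divide_distrib sum_distrib_right by (intro sum.cong refl) (simp add: field_simps)
      then show ?thesis unfolding boltzmann_expect_def using suminf_divide[OF conjunct1[OF ka]] by simp
    qed
    show ?thesis unfolding be using Lim_transform_eventually[OF lim ev] .
  qed
  show ?thesis
  proof (intro conjI allI impI)
    show "prod_coeff (egf_coeff SF wF) (egf_coeff SG wG) \<sim>[at_top] (\<lambda>n. egf_val SF wF \<rho> * egf_coeff SG wG n)"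
      using part1 unfolding f_def g_def .
  next
    fix h :: "nat \<times> 'a \<Rightarrow> real" assume "\<exists>B. \<forall>p. \<bar>h p\<bar> \<le> B"
    then obtain B where "\<forall>p. \<bar>h p\<bar> \<le> B" by blast
    then show "(\<lambda>n. comp_expect SF trF wF SG wG n h) \<longlonglongrightarrow> boltzmann_expect SF wF \<rho> h"
      by (rule part2)
  qed
qed

end
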